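(* For any two mm-spaces $X$ and $Y$, \[ d_{\mathrm{conc}}(X,Y)=\inf_{\pi\in\Pi(m_X,m_Y)} d_{\mathrm{conc}}^{\pi}(X,Y). \]
   Context: An mm-space is a complete separable metric space $(X,d_X)$ with a Borel probability measure $m_X$. $\Pi(m_X,m_Y)$: Borel probability measures on $X\times Y$ with marginals $m_X,m_Y$. $\mathcal{L}ip_1(X)$ is the set of 1-Lipschitz functions $X\to\mathbb R$. For a measure space $(Z,\mu)$ and measurable $f,g:Z\to\mathbb R$, $d_{\mathrm{KF}}^\mu(f,g):=\inf\{\varepsilon\ge0:\mu(\{|f-g|>\varepsilon\})\le\varepsilon\}$; $d_{\mathrm H}^{d_{\mathrm{KF}}^\mu}$ is the associated Hausdorff distance between sets of functions. $F^*G:=G\circ F$. $d_{\mathrm{conc}}^{\pi}(X,Y):=d_{\mathrm H}^{d_{\mathrm{KF}}^\pi}(\mathrm{pr}_1^*\mathcal{L}ip_1(X),\mathrm{pr}_2^*\mathcal{L}ip_1(Y))$. $I=[0,1)$ with Lebesgue measure $\mathcal L^1$; a parameter of $X$ is a Borel $\varphi:I\to X$ with $\varphi_*\mathcal L^1=m_X$. $d_{\mathrm{conc}}(X,Y):=\inf_{\varphi,\psi}d_{\mathrm H}^{d_{\mathrm{KF}}^{\mathcal L^1}}(\varphi^*\mathcal{L}ip_1(X),\psi^*\mathcal{L}ip_1(Y))$ over parameters $\varphi,\psi$ of $X,Y$. *)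

theory Defs
  imports "HOL-Probability.Probability"
begin

definition mm_space :: "'a::polish_space measure \<Rightarrow> bool" where
  "mm_space M \<longleftrightarrow> sets M = sets borel \<and> prob_space M"

definition lip1 :: "('a::metric_space \<Rightarrow> real) set" where
  "lip1 = {f. 1-lipschitz_on UNIV f}"

definition dKF :: "'z measure \<Rightarrow> ('z \<Rightarrow> real) \<Rightarrow> ('z \<Rightarrow> real) \<Rightarrow> real" where
  "dKF \<mu> f g = Inf {\<epsilon>. 0 \<le> \<epsilon> \<and> measure \<mu> {z \<in> space \<mu>. \<bar>f z - g z\<bar> > \<epsilon>} \<le> \<epsilon>}"

definition hausdorff_dist :: "('f \<Rightarrow> 'f \<Rightarrow> real) \<Rightarrow> 'f set \<Rightarrow> 'f set \<Rightarrow> real" where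
  "hausdorff_dist d A B =
     max (SUP a\<in>A. INF b\<in>B. d a b) (SUP b\<in>B. INF a\<in>A. d a b)"

definition couplings :: "'a::polish_space measure \<Rightarrow> 'b::polish_space measure \<Rightarrow> ('a \<times> 'b) measure set" where
  "couplings mX mY = {\<pi>. sets \<pi> = sets borel \<and> prob_space \<pi> \<and>
      distr \<pi> borel fst = mX \<and> distr \<pi> borel snd = mY}"

definition unitI :: "real measure" where
  "unitI = restrict_space lborel {0..<1}"

definition parameters :: "'a::polish_space measure \<Rightarrow> (real \<Rightarrow> 'a) set" where
  "parameters M = {\<phi>. \<phi> \<in> measurable unitI borel \<and> distr unitI borel \<phi> = M}"

definition dconc_pi :: "('a::polish_space \<times> 'b::polish_space) measure \<Rightarrow> real" where
  "dconc_pi \<pi> = hausdorff_dist (dKF \<pi>)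
      ((\<lambda>f. f \<circ> fst) ` (lip1 :: ('a \<Rightarrow> real) set))
      ((\<lambda>g. g \<circ> snd) ` (lip1 :: ('b \<Rightarrow> real) set))"

definition dconc :: "'a::polish_space measure \<Rightarrow> 'b::polish_space measure \<Rightarrow> real" where
  "dconc mX mY = Inf {hausdorff_dist (dKF unitI)
        ((\<lambda>f. f \<circ> \<phi>) ` (lip1 :: ('a \<Rightarrow> real) set))
        ((\<lambda>g. g \<circ> \<psi>) ` (lip1 :: ('b \<Rightarrow> real) set))
      | \<phi> \<psi>. \<phi> \<in> parameters mX \<and> \<psi> \<in> parameters mY}"

end

theory Submission
  imports Defs "HOL-Probability.Probability"
begin

lemma geo_tail: "(\<lambda>i. 2 / 4 ^ Suc (Suc i) :: real) sums (1/6)"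
proof -
  have "(\<lambda>i. (1/4::real)^i) sums (1 / (1 - 1/4))" by (rule geometric_sums) simp
  hence "(\<lambda>i. (1/8) * (1/4::real)^i) sums ((1/8) * (1 / (1 - 1/4)))" by (rule sums_mult)
  moreover have "(\<lambda>i. (1/8) * (1/4::real)^i) = (\<lambda>i. 2 / 4 ^ Suc (Suc i))"
    by (auto simp: power_divide field_simps)
  ultimately show ?thesis by simp
qed

lemma geo_all: "summable (\<lambda>i. 2 / 4 ^ Suc i :: real)"
proof -
  have "summable (\<lambda>i. (1/2) * (1/4::real)^i)" by (intro summable_mult summable_geometric) simp
  moreover have "(\<lambda>i. (1/2) * (1/4::real)^i) = (\<lambda>i. 2 / 4 ^ Suc i)"
    by (auto simp: power_divide field_simps)
  ultimately show ?thesis by metis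
qed

lemma summable_digits: "summable (\<lambda>j. if c j then 2 / 4 ^ Suc j else (0::real))"
  by (rule summable_comparison_test[OF _ geo_all]) auto

lemma digit_decode:
  fixes c :: "nat \<Rightarrow> bool"
  shows "(frac (4^m * (\<Sum>j. if c j then 2 / 4 ^ Suc j else (0::real))) \<ge> 1/2) \<longleftrightarrow> c m"
proof -
  define f where "f j = (if c j then 2 / 4 ^ Suc j else (0::real))" for j
  have sf: "summable f" unfolding f_def by (rule summable_digits)
  have split: "suminf f = (\<Sum>i. f (i+m)) + sum f {..<m}"
    by (rule suminf_split_initial_segment[OF sf])
  have int: "4^m * sum f {..<m} \<in> \<int>"
  proof -
    have "4^m * sum f {..<m} = (\<Sum>j<m. 4^m * f j)" by (simp add: sum_distrib_left)
    also have "\<dots> \<in> \<int>"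
    proof (rule Ints_sum)
      fix j assume "j \<in> {..<m}"
      hence "m = (m - Suc j) + Suc j" by simp
      hence "(4::real)^m = 4^(m - Suc j) * 4 ^ Suc j"
        by (metis power_add)
      thus "4^m * f j \<in> \<int>" by (simp add: f_def)
    qed
    finally show ?thesis .
  qed
  define g where "g i = (if c (i+m) then 2 / 4 ^ Suc i else (0::real))" for i
  have sg: "summable g" unfolding g_def by (rule summable_digits)
  have "4^m * (\<Sum>i. f (i+m)) = (\<Sum>i. 4^m * f (i+m))"
    using summable_ignore_initial_segment[OF sf, of m] by (simp add: suminf_mult)
  also have "(\<lambda>i. 4^m * f (i+m)) = g"
    by (auto simp: f_def g_def power_add field_simps)
  finally have T: "4^m * (\<Sum>i. f (i+m)) = suminf g" .
  have hd: "suminf g = g 0 + (\<Sum>i. g (Suc i))"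
    using suminf_split_head[OF sg] by simp
  have sgs: "summable (\<lambda>i. g (Suc i))" using sg summable_Suc_iff by blast
  have r0: "0 \<le> (\<Sum>i. g (Suc i))" by (rule suminf_nonneg[OF sgs]) (auto simp: g_def)
  have r1: "(\<Sum>i. g (Suc i)) \<le> 1/6"
  proof -
    have "(\<Sum>i. g (Suc i)) \<le> (\<Sum>i. 2 / 4 ^ Suc (Suc i))"
      by (rule suminf_le[OF _ sgs sums_summable[OF geo_tail]]) (auto simp: g_def)
    thus ?thesis using sums_unique[OF geo_tail] by simp
  qed
  have g0: "g 0 = (if c m then 1/2 else 0)" by (simp add: g_def)
  have "frac (4^m * suminf f) = frac (4^m * sum f {..<m} + suminf g)"
    by (simp add: split distrib_left T add.commute)
  also have "\<dots> = frac (suminf g)" by (rule frac_add_int_left[OF int])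
  also have "\<dots> = suminf g" using hd g0 r0 r1 by (intro frac_eq_id) auto
  finally have "frac (4^m * suminf f) = suminf g" .
  thus ?thesis using hd g0 r0 r1 unfolding f_def by auto
qed

lemma cauchy_geo:
  fixes f :: "nat \<Rightarrow> 'a::polish_space"
  assumes d: "\<And>n. dist (f n) (f (Suc n)) \<le> 2 * (1/2)^n"
  shows "Cauchy f"
proof -
  have k: "dist (f m) (f (m+k)) \<le> 4*(1/2)^m - 4*(1/2)^(m+k)" for m k
  proof (induction k)
    case 0 then show ?case by simp
  next
    case (Suc k)
    have "dist (f m) (f (m + Suc k)) \<le> dist (f m) (f (m+k)) + dist (f (m+k)) (f (Suc (m+k)))"
      by (simp add: dist_triangle)
    also have "\<dots> \<le> 4*(1/2)^m - 4*(1/2)^(m+k) + 2*(1/2)^(m+k)"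
      using Suc d[of "m+k"] by linarith
    also have "\<dots> = 4*(1/2)^m - 4*(1/2)^(m + Suc k)" by simp
    finally show ?case .
  qed
  have k': "dist (f m) (f n) \<le> 4*(1/2)^m" if "m \<le> n" for m n
  proof -
    have "0 \<le> 4*(1/2::real)^n" by simp
    moreover have "dist (f m) (f n) \<le> 4*(1/2)^m - 4*(1/2)^n"
      using k[of m "n-m"] that by (simp add: le_add_diff_inverse)
    ultimately show ?thesis by linarith
  qed
  show ?thesis
  proof (rule metric_CauchyI)
    fix e :: real assume "0 < e"
    then obtain M where M: "(1/2::real)^M < e/8" using real_arch_pow_inv[of "e/8" "1/2"] by auto
    show "\<exists>M. \<forall>m\<ge>M. \<forall>n\<ge>M. dist (f m) (f n) < e"
    proof (intro exI allI impI)
      fix m n assume "M \<le> m" "M \<le> n"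
      have "dist (f m) (f n) \<le> dist (f M) (f m) + dist (f M) (f n)" by (rule dist_triangle3)
      also have "\<dots> \<le> 8*(1/2)^M" using k'[OF \<open>M \<le> m\<close>] k'[OF \<open>M \<le> n\<close>] by simp
      finally show "dist (f m) (f n) < e" using M by simp
    qed
  qed
qed

definition enc :: "(nat \<Rightarrow> 'a::polish_space) \<Rightarrow> 'a \<Rightarrow> real" where
  "enc xs x = (\<Sum>j. if dist x (xs (snd (prod_decode j))) < (1/2)^(fst (prod_decode j)) then 2 / 4 ^ Suc j else 0)"

definition bitr :: "real \<Rightarrow> nat \<Rightarrow> bool" where
  "bitr y m \<longleftrightarrow> frac (4^m*y) \<ge> 1/2"

definition kap :: "real \<Rightarrow> nat \<Rightarrow> nat" where
  "kap y n = (LEAST k. bitr y (prod_encode (n,k)))"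

primrec seqd :: "(nat \<Rightarrow> 'a::polish_space) \<Rightarrow> real \<Rightarrow> nat \<Rightarrow> 'a" where
  "seqd xs y 0 = xs (kap y 0)"
| "seqd xs y (Suc n) = (if dist (xs (kap y (Suc n))) (seqd xs y n) < 2*(1/2)^n
      then xs (kap y (Suc n)) else seqd xs y n)"

definition dec :: "(nat \<Rightarrow> 'a::polish_space) \<Rightarrow> real \<Rightarrow> 'a" where
  "dec xs y = lim (seqd xs y)"

lemma bitr_enc: "bitr (enc xs x) (prod_encode (n,k)) \<longleftrightarrow> dist x (xs k) < (1/2)^n"
  unfolding bitr_def enc_def
  using digit_decode[where c="\<lambda>j. dist x (xs (snd (prod_decode j))) < (1/2)^(fst (prod_decode j))" and m="prod_encode (n,k)"]
  by simp

lemma enc_measurable: "enc xs \<in> borel_measurable borel"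
  unfolding enc_def by measurable

lemma bitr_pred: "Measurable.pred borel (\<lambda>y. bitr y m)"
  unfolding bitr_def frac_def by measurable

lemma kap_measurable: "(\<lambda>y. kap y n) \<in> borel \<rightarrow>\<^sub>M count_space UNIV"
  unfolding kap_def by (rule measurable_Least) (rule bitr_pred)

lemma xs_kap_measurable: "(\<lambda>y. xs (kap y n)) \<in> borel_measurable borel"
  by (rule measurable_compose_countable[OF _ kap_measurable]) simp

lemma seqd_measurable: "(\<lambda>y. seqd xs y n) \<in> borel_measurable borel"
proof (induction n)
  case 0 then show ?case using xs_kap_measurable by simp
next
  case (Suc n)
  note [measurable] = Suc xs_kap_measurable[of xs "Suc n"] kap_measurable
  show ?case by simp measurable
qed

lemma seqd_cauchy: "Cauchy (seqd xs y)"
proof (rule cauchy_geo)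
  fix n show "dist (seqd xs y n) (seqd xs y (Suc n)) \<le> 2 * (1/2)^n"
    by (auto simp: dist_commute less_imp_le)
qed

lemma seqd_conv: "seqd xs y \<longlonglongrightarrow> dec (xs :: nat \<Rightarrow> 'a::polish_space) y"
  unfolding dec_def using seqd_cauchy Cauchy_convergent_iff convergent_LIMSEQ_iff by blast

lemma dec_measurable: "dec (xs :: nat \<Rightarrow> 'a::polish_space) \<in> borel_measurable borel"
  by (rule borel_measurable_LIMSEQ_metric[OF seqd_measurable seqd_conv])

lemma dec_enc:
  fixes xs :: "nat \<Rightarrow> 'a::polish_space"
  assumes dense: "\<And>x e. e > 0 \<Longrightarrow> \<exists>k. dist x (xs k) < e"
  shows "dec xs (enc xs x) = x"
proof -
  let ?y = "enc xs x"
  have kp: "dist x (xs (kap ?y n)) < (1/2)^n" for n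
  proof -
    obtain k where "dist x (xs k) < (1/2)^n" using dense[of "(1/2)^n"] by auto
    hence "bitr ?y (prod_encode (n,k))" by (simp add: bitr_enc)
    hence "bitr ?y (prod_encode (n, kap ?y n))" unfolding kap_def by (rule LeastI)
    thus ?thesis by (simp add: bitr_enc)
  qed
  have sq: "seqd xs ?y n = xs (kap ?y n)" for n
  proof (induction n)
    case 0 then show ?case by simp
  next
    case (Suc n)
    have "dist (xs (kap ?y (Suc n))) (xs (kap ?y n)) \<le> dist x (xs (kap ?y (Suc n))) + dist x (xs (kap ?y n))"
      by (rule dist_triangle3)
    also have "\<dots> < (1/2)^Suc n + (1/2)^n" using kp[of n] kp[of "Suc n"] by linarith
    also have "\<dots> \<le> 2*(1/2)^n" by simp
    finally show ?case using Suc by simp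
  qed
  have "seqd xs ?y \<longlonglongrightarrow> x"
  proof (rule metric_LIMSEQ_I)
    fix r :: real assume "0 < r"
    then obtain N where N: "(1/2::real)^N < r" using real_arch_pow_inv[of r "1/2"] by auto
    show "\<exists>N. \<forall>n\<ge>N. dist (seqd xs ?y n) x < r"
    proof (intro exI allI impI)
      fix n assume "N \<le> n"
      have "(1/2::real)^n \<le> (1/2)^N" using \<open>N \<le> n\<close> by (simp add: power_decreasing)
      with kp[of n] N have "dist x (xs (kap ?y n)) < r" by linarith
      thus "dist (seqd xs ?y n) x < r" using kp[of n] N by (simp add: sq dist_commute)
    qed
  qed
  with seqd_conv[of xs ?y] show ?thesis using LIMSEQ_unique by blast
qed

lemma exists_dense_seq:
  "\<exists>xs :: nat \<Rightarrow> 'a::polish_space. \<forall>x e. e > 0 \<longrightarrow> (\<exists>k. dist x (xs k) < e)"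
proof -
  obtain D :: "'a set" where D: "countable D" "\<And>X. open X \<Longrightarrow> X \<noteq> {} \<Longrightarrow> \<exists>d\<in>D. d \<in> X"
    using countable_dense_setE by blast
  have "D \<noteq> {}" using D(2)[of UNIV] by auto
  have "\<exists>k. dist x (from_nat_into D k) < e" if "e > 0" for x e
  proof -
    have "ball x e \<noteq> {}" using that by auto
    then obtain d where "d \<in> D" "d \<in> ball x e" using D(2)[of "ball x e"] by blast
    then show ?thesis using from_nat_into_surj[OF D(1) \<open>d \<in> D\<close>] by (auto simp: dist_commute)
  qed
  thus ?thesis by blast
qed

lemma borel_encoding:
  "\<exists>(h :: 'a::polish_space \<Rightarrow> real) g. h \<in> borel_measurable borel \<and> g \<in> borel_measurable borel \<and> (\<forall>x. g (h x) = x)"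
  using exists_dense_seq enc_measurable dec_measurable dec_enc by metis


lemma param_exists:
  fixes M :: "'a::polish_space measure"
  assumes "mm_space M"
  shows "\<exists>\<phi>. \<phi> \<in> parameters M"
proof -
  have sM: "sets M = sets borel" and pM: "prob_space M" using assms by (auto simp: mm_space_def)
  obtain h :: "'a \<Rightarrow> real" and g where h[measurable]: "h \<in> borel_measurable borel"
    and g[measurable]: "g \<in> borel_measurable borel" and gh: "\<And>x. g (h x) = x"
    using borel_encoding by blast
  have hM: "h \<in> borel_measurable M" using h measurable_cong_sets[OF sM refl] by blast
  define N where "N = distr M borel h"
  have rd: "real_distribution N"
    unfolding N_def real_distribution_def
    using prob_space.prob_space_distr[OF pM hM] by (auto simp: real_distribution_axioms_def)
  interpret N: cdf_distribution N unfolding cdf_distribution_def by (rule rd)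
  define Q where "Q t = (if t \<in> {0<..<1::real} then N.I t else 0)" for t
  have Qm[measurable]: "Q \<in> borel_measurable borel"
  proof -
    have "N.I \<in> borel_measurable (restrict_space borel {0<..<1})" by (rule N.measurable_CI)
    hence "(\<lambda>t. if t \<in> {0<..<1::real} then N.I t else 0) \<in> borel \<rightarrow>\<^sub>M borel"
      by (subst (asm) measurable_restrict_space_iff) auto
    thus ?thesis unfolding Q_def .
  qed
  define \<phi> where "\<phi> t = g (Q t)" for t
  have \<phi>m: "\<phi> \<in> borel_measurable borel" unfolding \<phi>_def by measurable
  have \<phi>I: "\<phi> \<in> measurable unitI borel"
    unfolding unitI_def
    by (rule measurable_restrict_space1) (use \<phi>m in \<open>simp add: measurable_lborel1\<close>)
  have dQ: "distr (restrict_space lborel {0<..<1::real}) borel N.I = N" by (rule N.distr_I_eq_M)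
  have "distr unitI borel \<phi> = M"
  proof (rule measure_eqI)
    show "sets (distr unitI borel \<phi>) = sets M" using sM by simp
    fix A assume "A \<in> sets (distr unitI borel \<phi>)"
    hence A[measurable]: "A \<in> sets borel" by simp
    have "emeasure (distr unitI borel \<phi>) A = emeasure unitI (\<phi> -` A \<inter> space unitI)"
      by (rule emeasure_distr[OF \<phi>I]) simp
    also have "\<dots> = emeasure lborel (\<phi> -` A \<inter> {0..<1})"
      unfolding unitI_def
      by (subst emeasure_restrict_space) (auto simp: space_restrict_space)
    also have "\<dots> = emeasure lborel (N.I -` (g -` A) \<inter> {0<..<1})"
    proof (rule emeasure_eq_AE)
      show "AE t in lborel. (t \<in> \<phi> -` A \<inter> {0..<1}) = (t \<in> N.I -` (g -` A) \<inter> {0<..<1})"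
        using AE_lborel_singleton[of 0] by eventually_elim (auto simp: \<phi>_def Q_def)
      show "\<phi> -` A \<inter> {0..<1} \<in> sets lborel" using \<phi>m by (simp add: measurable_sets_borel)
      have "(g -` A) \<in> sets borel" using measurable_sets_borel[OF g A] .
      hence "N.I -` (g -` A) \<inter> space (restrict_space borel {0<..<1::real}) \<in> sets (restrict_space borel {0<..<1::real})"
        using N.measurable_CI by (rule measurable_sets[rotated]) 
      thus "N.I -` (g -` A) \<inter> {0<..<1} \<in> sets lborel"
        by (auto simp: space_restrict_space sets_restrict_space_iff)
    qed
    also have "\<dots> = emeasure (restrict_space lborel {0<..<1::real}) (N.I -` (g -` A) \<inter> space (restrict_space lborel {0<..<1::real}))"
      by (subst emeasure_restrict_space) (auto simp: space_restrict_space)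
    also have "\<dots> = emeasure (distr (restrict_space lborel {0<..<1::real}) borel N.I) (g -` A)"
    proof (rule emeasure_distr[symmetric])
      show "N.I \<in> restrict_space lborel {0<..<1} \<rightarrow>\<^sub>M borel"
        using N.measurable_CI by (simp add: measurable_lborel1 measurable_restrict_space_iff)
      show "g -` A \<in> sets borel" using measurable_sets_borel[OF g A] .
    qed
    also have "\<dots> = emeasure N (g -` A)" by (simp add: dQ)
    also have "\<dots> = emeasure M (h -` (g -` A) \<inter> space M)"
      unfolding N_def by (rule emeasure_distr[OF hM]) (use measurable_sets_borel[OF g A] in simp)
    also have "h -` (g -` A) \<inter> space M = A"
      using sets.sets_into_space[of A M] sM A gh by auto
    finally show "emeasure (distr unitI borel \<phi>) A = emeasure M A" .
  qed
  thus ?thesis using \<phi>I unfolding parameters_def by blast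
qed


instance prod :: (polish_space, polish_space) polish_space ..

lemma lip1_meas: "f \<in> lip1 \<Longrightarrow> f \<in> borel_measurable borel"
  unfolding lip1_def
  by (rule borel_measurable_continuous_onI) (auto intro: lipschitz_on_continuous_on)

lemma unitI_prob: "prob_space unitI"
  unfolding unitI_def
  by (rule prob_spaceI) (simp add: emeasure_restrict_space space_restrict_space)

lemma space_unitI: "space unitI = {0..<1}"
  by (simp add: unitI_def space_restrict_space)

lemma pair_meas:
  assumes "\<phi> \<in> measurable unitI (borel :: 'a::polish_space measure)" "\<psi> \<in> measurable unitI (borel :: 'b::polish_space measure)"
  shows "(\<lambda>t. (\<phi> t, \<psi> t)) \<in> measurable unitI (borel :: ('a \<times> 'b) measure)"
  using measurable_Pair[OF assms] by (simp add: borel_prod)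

lemma fst_meas: "fst \<in> measurable (borel :: ('a::polish_space \<times> 'b::polish_space) measure) borel"
  using measurable_fst[of "borel :: 'a measure" "borel :: 'b measure"] by (simp add: borel_prod)
lemma snd_meas: "snd \<in> measurable (borel :: ('a::polish_space \<times> 'b::polish_space) measure) borel"
  using measurable_snd[of "borel :: 'a measure" "borel :: 'b measure"] by (simp add: borel_prod)

lemma dKF_transfer:
  fixes \<phi> :: "real \<Rightarrow> 'a::polish_space" and \<psi> :: "real \<Rightarrow> 'b::polish_space"
  assumes \<phi>: "\<phi> \<in> measurable unitI borel" and \<psi>: "\<psi> \<in> measurable unitI borel"
    and f: "f \<in> lip1" and g: "g \<in> lip1"
  shows "dKF unitI (f \<circ> \<phi>) (g \<circ> \<psi>) = dKF (distr unitI borel (\<lambda>t. (\<phi> t, \<psi> t))) (f \<circ> fst) (g \<circ> snd)"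
proof -
  note fm[measurable] = lip1_meas[OF f] and gm[measurable] = lip1_meas[OF g]
  note pm = pair_meas[OF \<phi> \<psi>]
  have "measure (distr unitI borel (\<lambda>t. (\<phi> t, \<psi> t))) {z \<in> space (distr unitI borel (\<lambda>t. (\<phi> t, \<psi> t))). \<bar>(f \<circ> fst) z - (g \<circ> snd) z\<bar> > e}
      = measure unitI {t \<in> space unitI. \<bar>(f \<circ> \<phi>) t - (g \<circ> \<psi>) t\<bar> > e}" for e
  proof -
    have S: "{z :: 'a \<times> 'b. \<bar>f (fst z) - g (snd z)\<bar> > e} \<in> sets borel"
    proof -
      have "(\<lambda>z :: 'a \<times> 'b. \<bar>f (fst z) - g (snd z)\<bar>) \<in> borel_measurable borel"
        using fst_meas snd_meas by measurable
      thus ?thesis by measurable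
    qed
    have "measure (distr unitI borel (\<lambda>t. (\<phi> t, \<psi> t))) {z. \<bar>f (fst z) - g (snd z)\<bar> > e}
       = measure unitI ((\<lambda>t. (\<phi> t, \<psi> t)) -` {z. \<bar>f (fst z) - g (snd z)\<bar> > e} \<inter> space unitI)"
      by (rule measure_distr[OF pm S])
    thus ?thesis by (simp add: Int_def conj_commute)
  qed
  thus ?thesis unfolding dKF_def by simp
qed

lemma hd_transfer:
  fixes \<phi> :: "real \<Rightarrow> 'a::polish_space" and \<psi> :: "real \<Rightarrow> 'b::polish_space"
  assumes \<phi>: "\<phi> \<in> measurable unitI borel" and \<psi>: "\<psi> \<in> measurable unitI borel"
  shows "hausdorff_dist (dKF unitI) ((\<lambda>f. f \<circ> \<phi>) ` (lip1 :: ('a \<Rightarrow> real) set)) ((\<lambda>g. g \<circ> \<psi>) ` (lip1 :: ('b \<Rightarrow> real) set))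
    = dconc_pi (distr unitI borel (\<lambda>t. (\<phi> t, \<psi> t)))"
  unfolding hausdorff_dist_def dconc_pi_def image_image
  by (intro arg_cong2[where f=max] SUP_cong INF_cong refl dKF_transfer[OF \<phi> \<psi>])

lemma pair_coupling:
  fixes \<phi> :: "real \<Rightarrow> 'a::polish_space" and \<psi> :: "real \<Rightarrow> 'b::polish_space"
  assumes \<phi>: "\<phi> \<in> parameters mX" and \<psi>: "\<psi> \<in> parameters mY"
  shows "distr unitI borel (\<lambda>t. (\<phi> t, \<psi> t)) \<in> couplings mX mY"
proof -
  have \<phi>m: "\<phi> \<in> measurable unitI borel" and \<psi>m: "\<psi> \<in> measurable unitI borel"
    and d1: "distr unitI borel \<phi> = mX" and d2: "distr unitI borel \<psi> = mY"
    using \<phi> \<psi> by (auto simp: parameters_def)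
  note pm = pair_meas[OF \<phi>m \<psi>m]
  have "distr (distr unitI borel (\<lambda>t. (\<phi> t, \<psi> t))) borel fst = distr unitI borel (fst \<circ> (\<lambda>t. (\<phi> t, \<psi> t)))"
    by (rule distr_distr[OF fst_meas pm])
  hence e1: "distr (distr unitI borel (\<lambda>t. (\<phi> t, \<psi> t))) borel fst = mX" using d1 by (simp add: comp_def)
  have "distr (distr unitI borel (\<lambda>t. (\<phi> t, \<psi> t))) borel snd = distr unitI borel (snd \<circ> (\<lambda>t. (\<phi> t, \<psi> t)))"
    by (rule distr_distr[OF snd_meas pm])
  hence e2: "distr (distr unitI borel (\<lambda>t. (\<phi> t, \<psi> t))) borel snd = mY" using d2 by (simp add: comp_def)
  show ?thesis unfolding couplings_def
    using e1 e2 prob_space.prob_space_distr[OF unitI_prob pm] by simp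
qed

theorem proposition5p5:
  fixes mX :: "'a::polish_space measure" and mY :: "'b::polish_space measure"
  assumes "mm_space mX" and "mm_space mY"
  shows "dconc mX mY = (INF \<pi>\<in>couplings mX mY. dconc_pi \<pi>)"
proof -
  have eq: "{hausdorff_dist (dKF unitI)
        ((\<lambda>f. f \<circ> \<phi>) ` (lip1 :: ('a \<Rightarrow> real) set))
        ((\<lambda>g. g \<circ> \<psi>) ` (lip1 :: ('b \<Rightarrow> real) set))
      | \<phi> \<psi>. \<phi> \<in> parameters mX \<and> \<psi> \<in> parameters mY} = dconc_pi ` couplings mX mY"
  proof (intro equalityI subsetI)
    fix v assume "v \<in> {hausdorff_dist (dKF unitI)
        ((\<lambda>f. f \<circ> \<phi>) ` (lip1 :: ('a \<Rightarrow> real) set))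
        ((\<lambda>g. g \<circ> \<psi>) ` (lip1 :: ('b \<Rightarrow> real) set))
      | \<phi> \<psi>. \<phi> \<in> parameters mX \<and> \<psi> \<in> parameters mY}"
    then obtain \<phi> \<psi> where p: "\<phi> \<in> parameters mX" "\<psi> \<in> parameters mY" and v:
      "v = hausdorff_dist (dKF unitI) ((\<lambda>f. f \<circ> \<phi>) ` (lip1 :: ('a \<Rightarrow> real) set))
        ((\<lambda>g. g \<circ> \<psi>) ` (lip1 :: ('b \<Rightarrow> real) set))" by blast
    have "v = dconc_pi (distr unitI borel (\<lambda>t. (\<phi> t, \<psi> t)))"
      using v hd_transfer p by (auto simp: parameters_def)
    thus "v \<in> dconc_pi ` couplings mX mY" using pair_coupling[OF p] by blast
  next
    fix v assume "v \<in> dconc_pi ` couplings mX mY"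
    then obtain \<pi> where \<pi>: "\<pi> \<in> couplings mX mY" and v: "v = dconc_pi \<pi>" by blast
    have "mm_space \<pi>" using \<pi> by (simp add: couplings_def mm_space_def)
    then obtain kk where kk: "kk \<in> parameters \<pi>" using param_exists by blast
    have kkm: "kk \<in> measurable unitI borel" and dkk: "distr unitI borel kk = \<pi>"
      using kk by (auto simp: parameters_def)
    define \<phi> where "\<phi> = fst \<circ> kk"
    define \<psi> where "\<psi> = snd \<circ> kk"
    have \<phi>m: "\<phi> \<in> measurable unitI borel" unfolding \<phi>_def by (rule measurable_comp[OF kkm fst_meas])
    have \<psi>m: "\<psi> \<in> measurable unitI borel" unfolding \<psi>_def by (rule measurable_comp[OF kkm snd_meas])
    have "distr unitI borel \<phi> = distr (distr unitI borel kk) borel fst"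
      unfolding \<phi>_def by (rule distr_distr[OF fst_meas kkm, symmetric])
    hence p1: "\<phi> \<in> parameters mX" using \<phi>m \<pi> dkk by (simp add: parameters_def couplings_def)
    have "distr unitI borel \<psi> = distr (distr unitI borel kk) borel snd"
      unfolding \<psi>_def by (rule distr_distr[OF snd_meas kkm, symmetric])
    hence p2: "\<psi> \<in> parameters mY" using \<psi>m \<pi> dkk by (simp add: parameters_def couplings_def)
    have ch: "(\<lambda>t. (\<phi> t, \<psi> t)) = kk" by (simp add: \<phi>_def \<psi>_def)
    have "v = hausdorff_dist (dKF unitI) ((\<lambda>f. f \<circ> \<phi>) ` (lip1 :: ('a \<Rightarrow> real) set))
        ((\<lambda>g. g \<circ> \<psi>) ` (lip1 :: ('b \<Rightarrow> real) set))"
      using hd_transfer[OF \<phi>m \<psi>m] ch dkk v by simp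
    thus "v \<in> {hausdorff_dist (dKF unitI)
        ((\<lambda>f. f \<circ> \<phi>) ` (lip1 :: ('a \<Rightarrow> real) set))
        ((\<lambda>g. g \<circ> \<psi>) ` (lip1 :: ('b \<Rightarrow> real) set))
      | \<phi> \<psi>. \<phi> \<in> parameters mX \<and> \<psi> \<in> parameters mY}" using p1 p2 by blast
  qed
  show ?thesis unfolding dconc_def eq by simp
qed

end
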